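(* Let $S$ be a finite set and $r:S\times S\to[0,\infty)$ with $r(x,y)>0$ for all distinct $x,y\in S$. Consider the inclusion process on $S$ with underlying rates $r$ and parameter $d_N>0$ satisfying $\lim_{N\to\infty}d_N\frac{N^2}{(\log N)^2}=0$. Fix $\delta>0$ and let $\mathcal U_N=\{\eta\in\mathcal H_N:\eta_x\le\delta\log N\text{ for some }x\in S\}$, and let $\tau_{\mathcal U_N}$ be the hitting time of $\mathcal U_N$ by the inclusion process. Then there exists a constant $C=C(\delta)>0$ such that for all $N$, $$\sup_{\eta\in\mathcal H_N}\mathbb E_\eta[\tau_{\mathcal U_N}]\le CN.$$
   Context: $\mathcal H_N=\{\eta\in\{0,1,2,\dots\}^S:\sum_{x\in S}\eta_x=N\}$; for $\eta$ with $\eta_x\ge1$, $\sigma^{x,y}\eta$ moves one particle from $x$ to $y$ ($\sigma^{x,y}\eta=\eta$ if $\eta_x=0$). The inclusion process $\eta_N(\cdot)$ is the continuous-time Markov chain on $\mathcal H_N$ with generator $(\mathcal L_NF)(\eta)=\sum_{x\ne y}\eta_x(d_N+\eta_y)r(x,y)\{F(\sigma^{x,y}\eta)-F(\eta)\}$; $\mathbb E_\eta$ is expectation for the process started at $\eta$. *)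

theory Defs
  imports "HOL-Analysis.Analysis"
begin

definition config_space :: "'a set \<Rightarrow> nat \<Rightarrow> ('a \<Rightarrow> nat) set" where
  "config_space S N = {\<eta>. (\<forall>x. x \<notin> S \<longrightarrow> \<eta> x = 0) \<and> (\<Sum>x\<in>S. \<eta> x) = N}"

definition move :: "'a \<Rightarrow> 'a \<Rightarrow> ('a \<Rightarrow> nat) \<Rightarrow> ('a \<Rightarrow> nat)" where
  "move x y \<eta> = (if 1 \<le> \<eta> x then (\<eta>(x := \<eta> x - 1))(y := \<eta> y + 1) else \<eta>)"

definition site_pairs :: "'a set \<Rightarrow> ('a \<times> 'a) set" where
  "site_pairs S = {(x, y). x \<in> S \<and> y \<in> S \<and> x \<noteq> y}"

definition incl_rate :: "('a \<Rightarrow> 'a \<Rightarrow> real) \<Rightarrow> real \<Rightarrow> ('a \<Rightarrow> nat) \<Rightarrow> 'a \<Rightarrow> 'a \<Rightarrow> real" where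
  "incl_rate r dN \<eta> x y = real (\<eta> x) * (dN + real (\<eta> y)) * r x y"

definition incl_total_rate :: "'a set \<Rightarrow> ('a \<Rightarrow> 'a \<Rightarrow> real) \<Rightarrow> real \<Rightarrow> ('a \<Rightarrow> nat) \<Rightarrow> real" where
  "incl_total_rate S r dN \<eta> = (\<Sum>(x, y)\<in>site_pairs S. incl_rate r dN \<eta> x y)"

text \<open>First-step (jump chain / holding time) operator for the expected hitting time of U:
  h(eta) = 0 on U, and off U
  h(eta) = 1/q(eta) + sum_{x<>y} (rate(eta,x,y)/q(eta)) h(sigma^{x,y} eta),
  with 1/0 = infinity in ennreal (a state with no jumps never reaches U).\<close>
definition incl_hit_step ::
  "'a set \<Rightarrow> ('a \<Rightarrow> 'a \<Rightarrow> real) \<Rightarrow> real \<Rightarrow> ('a \<Rightarrow> nat) set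
    \<Rightarrow> (('a \<Rightarrow> nat) \<Rightarrow> ennreal) \<Rightarrow> ('a \<Rightarrow> nat) \<Rightarrow> ennreal" where
  "incl_hit_step S r dN U h \<eta> =
     (if \<eta> \<in> U then 0
      else inverse (ennreal (incl_total_rate S r dN \<eta>)) +
           (\<Sum>(x, y)\<in>site_pairs S.
              ennreal (incl_rate r dN \<eta> x y / incl_total_rate S r dN \<eta>) * h (move x y \<eta>)))"

text \<open>E_eta[tau_U] for the inclusion process with parameter dN: the minimal nonnegative
  (possibly infinite) solution of the first-step equations, i.e. the least fixed point.\<close>
definition incl_expected_hitting_time ::
  "'a set \<Rightarrow> ('a \<Rightarrow> 'a \<Rightarrow> real) \<Rightarrow> real \<Rightarrow> ('a \<Rightarrow> nat) set \<Rightarrow> ('a \<Rightarrow> nat) \<Rightarrow> ennreal" where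
  "incl_expected_hitting_time S r dN U = lfp (incl_hit_step S r dN U)"

end

theory Submission
  imports Defs
begin



inductive_set fm_cone :: "(('v \<Rightarrow> real) \<times> real) set \<Rightarrow> (('v \<Rightarrow> real) \<times> real) set" for R where
  cone_zero: "((\<lambda>_. 0), 0) \<in> fm_cone R"
| cone_step: "(a, b) \<in> R \<Longrightarrow> 0 \<le> c \<Longrightarrow> (a', b') \<in> fm_cone R \<Longrightarrow>
     ((\<lambda>v. c * a v + a' v), c * b + b') \<in> fm_cone R"

lemma cone_add: "(a, b) \<in> fm_cone R \<Longrightarrow> (a2, b2) \<in> fm_cone R \<Longrightarrow> ((\<lambda>v. a v + a2 v), b + b2) \<in> fm_cone R"
proof (induction rule: fm_cone.induct)
  case cone_zero
  then show ?case by simp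
next
  case (cone_step a b c a' b')
  have "((\<lambda>v. c * a v + (\<lambda>v. a' v + a2 v) v), c * b + (b' + b2)) \<in> fm_cone R"
    using fm_cone.cone_step[OF cone_step.hyps(1,2) cone_step.IH[OF cone_step.prems]] by simp
  then show ?case by (simp add: add.assoc)
qed

lemma cone_scale: "(a, b) \<in> fm_cone R \<Longrightarrow> 0 \<le> c \<Longrightarrow> ((\<lambda>v. c * a v), c * b) \<in> fm_cone R"
proof (induction rule: fm_cone.induct)
  case cone_zero
  then show ?case using fm_cone.cone_zero by simp
next
  case (cone_step a b c' a' b')
  have "((\<lambda>v. (c*c') * a v + (\<lambda>v. c * a' v) v), (c*c') * b + c * b') \<in> fm_cone R"
    using fm_cone.cone_step[OF cone_step.hyps(1) _ cone_step.IH[OF cone_step.prems]] cone_step by simp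
  then show ?case by (simp add: algebra_simps)
qed

lemma cone_mono: "(a, b) \<in> fm_cone R' \<Longrightarrow> R' \<subseteq> fm_cone R \<Longrightarrow> (a, b) \<in> fm_cone R"
proof (induction rule: fm_cone.induct)
  case cone_zero
  show ?case by (rule fm_cone.cone_zero)
next
  case (cone_step a b c a' b')
  have "(a,b) \<in> fm_cone R" using cone_step by auto
  from cone_scale[OF this cone_step.hyps(2)]
  have 1: "((\<lambda>v. c * a v), c * b) \<in> fm_cone R" by simp
  from cone_add[OF 1 cone_step.IH[OF cone_step.prems]] show ?case by simp
qed

lemma cone_R: "p \<in> R \<Longrightarrow> p \<in> fm_cone R"
proof -
  assume p: "p \<in> R"
  have "((\<lambda>v. 1 * fst p v + 0), 1 * snd p + 0) \<in> fm_cone R"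
    by (rule fm_cone.cone_step[OF _ _ fm_cone.cone_zero]) (use p in auto)
  then show ?thesis by simp
qed

lemma cone_coord: "(a, b) \<in> fm_cone R \<Longrightarrow> (\<forall>q\<in>R. fst q w = 0) \<Longrightarrow> a w = 0"
  by (induction rule: fm_cone.induct) auto

lemma sep_point:
  fixes L U :: "real set"
  assumes "finite L" "finite U" "\<forall>l\<in>L. \<forall>u\<in>U. l \<le> u"
  shows "\<exists>t. (\<forall>l\<in>L. l \<le> t) \<and> (\<forall>u\<in>U. t \<le> u)"
proof (cases "L = {}")
  case True
  then show ?thesis
  proof (cases "U = {}")
    case False
    then show ?thesis using True assms by (intro exI[of _ "Min U"]) auto
  qed auto
next
  case False
  then show ?thesis using assms by (intro exI[of _ "Max L"]) auto
qed

lemma fm: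
  fixes R :: "(('v \<Rightarrow> real) \<times> real) set"
  assumes "finite V" "finite R" "\<not> (\<exists>x. \<forall>p\<in>R. (\<Sum>v\<in>V. fst p v * x v) \<le> snd p)"
  shows "\<exists>p\<in>fm_cone R. (\<forall>v\<in>V. fst p v = 0) \<and> snd p < 0"
  using assms
proof (induction V arbitrary: R rule: finite_induct)
  case empty
  then obtain p where p: "p \<in> R" "snd p < 0" by force
  then show ?case using cone_R by blast
next
  case (insert w V)
  define R0 where "R0 = {p\<in>R. fst p w = 0}"
  define Rp where "Rp = {p\<in>R. fst p w > 0}"
  define Rn where "Rn = {p\<in>R. fst p w < 0}"
  define comb where "comb = (\<lambda>(p::('v \<Rightarrow> real) \<times> real, q::('v \<Rightarrow> real) \<times> real).
     ((\<lambda>v. (- fst q w) * fst p v + fst p w * fst q v), (- fst q w) * snd p + fst p w * snd q))"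
  define R' where "R' = R0 \<union> comb ` (Rp \<times> Rn)"
  have fin: "finite R'" unfolding R'_def R0_def Rp_def Rn_def using insert.prems by auto
  have infeas: "\<not> (\<exists>x. \<forall>p\<in>R'. (\<Sum>v\<in>V. fst p v * x v) \<le> snd p)"
  proof
    assume "\<exists>x. \<forall>p\<in>R'. (\<Sum>v\<in>V. fst p v * x v) \<le> snd p"
    then obtain x' where x': "\<forall>p\<in>R'. (\<Sum>v\<in>V. fst p v * x' v) \<le> snd p" by blast
    define s where "s p = (\<Sum>v\<in>V. fst p v * x' v)" for p :: "('v \<Rightarrow> real) \<times> real"
    define up where "up p = (snd p - s p) / fst p w" for p :: "('v \<Rightarrow> real) \<times> real"
    have lu: "\<forall>l\<in>up ` Rn. \<forall>u\<in>up ` Rp. l \<le> u"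
    proof (intro ballI)
      fix l u assume "l \<in> up ` Rn" "u \<in> up ` Rp"
      then obtain q p where q: "q \<in> Rn" "l = up q" and p: "p \<in> Rp" "u = up p" by auto
      have "comb (p, q) \<in> R'" unfolding R'_def using p q by auto
      then have "(\<Sum>v\<in>V. fst (comb (p,q)) v * x' v) \<le> snd (comb (p,q))" using x' by blast
      moreover have "(\<Sum>v\<in>V. fst (comb (p,q)) v * x' v) = (\<Sum>v\<in>V. (- fst q w) * (fst p v * x' v) + fst p w * (fst q v * x' v))"
        by (simp add: comb_def algebra_simps)
      moreover have "\<dots> = (- fst q w) * s p + fst p w * s q"
        by (simp only: sum.distrib sum_distrib_left[symmetric] s_def)
      ultimately have "(- fst q w) * s p + fst p w * s q \<le> (- fst q w) * snd p + fst p w * snd q"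
        by (simp add: comb_def)
      moreover have "fst p w > 0" "fst q w < 0" using p q unfolding Rp_def Rn_def by auto
      ultimately have A: "fst q w * (snd p - s p) \<le> fst p w * (snd q - s q)"
        by (simp add: right_diff_distrib mult.commute)
      have pw: "fst p w > 0" and qw: "fst q w < 0" using p q unfolding Rp_def Rn_def by auto
      have "(snd q - s q) / fst q w \<le> (snd p - s p) / fst p w"
        using A pw qw by (simp add: divide_simps mult.commute)
      then show "l \<le> u" unfolding q p up_def .
    qed
    have fRn: "finite (up ` Rn)" "finite (up ` Rp)" using insert.prems(1) unfolding Rn_def Rp_def by auto
    obtain t where t: "\<forall>l\<in>up ` Rn. l \<le> t" "\<forall>u\<in>up ` Rp. t \<le> u"
      using sep_point[OF fRn lu] by blast
    define x where "x = x'(w := t)"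
    have "\<forall>p\<in>R. (\<Sum>v\<in>insert w V. fst p v * x v) \<le> snd p"
    proof
      fix p assume pR: "p \<in> R"
      have eq: "(\<Sum>v\<in>insert w V. fst p v * x v) = fst p w * t + s p"
      proof -
        have "(\<Sum>v\<in>V. fst p v * x v) = s p"
          unfolding s_def x_def using insert.hyps(2) by (intro sum.cong) auto
        then show ?thesis using insert.hyps by (simp add: x_def)
      qed
      show "(\<Sum>v\<in>insert w V. fst p v * x v) \<le> snd p"
      proof (cases "fst p w = 0")
        case True
        then have "p \<in> R'" unfolding R'_def R0_def using pR by auto
        then show ?thesis using x' True eq unfolding s_def by auto
      next
        case False
        show ?thesis
        proof (cases "fst p w > 0")
          case True
          then have "p \<in> Rp" using pR unfolding Rp_def by auto
          then have "t \<le> up p" using t(2) by blast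
          then show ?thesis using True eq unfolding up_def by (simp add: field_simps)
        next
          case F2: False
          then have neg: "fst p w < 0" using False by auto
          then have "p \<in> Rn" using pR unfolding Rn_def by auto
          then have "up p \<le> t" using t(1) by blast
          then show ?thesis using neg eq unfolding up_def by (simp add: field_simps)
        qed
      qed
    qed
    then show False using insert.prems by blast
  qed
  from insert.IH[OF fin infeas] obtain p where p: "p \<in> fm_cone R'" "\<forall>v\<in>V. fst p v = 0" "snd p < 0"
    by blast
  have sub: "R' \<subseteq> fm_cone R"
  proof
    fix q assume "q \<in> R'"
    then consider "q \<in> R0" | p1 p2 where "p1 \<in> Rp" "p2 \<in> Rn" "q = comb (p1, p2)"
      unfolding R'_def by auto
    then show "q \<in> fm_cone R"
    proof cases
      case 1 then have "q \<in> R" unfolding R0_def by auto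
      then show ?thesis by (rule cone_R)
    next
      case 2
      have "p2 \<in> R" using 2 unfolding Rn_def by auto
      then have c2: "p2 \<in> fm_cone R" by (rule cone_R)
      from cone_scale[of "fst p2" "snd p2", OF _, of R "fst p1 w"] c2 have s2: "((\<lambda>v. fst p1 w * fst p2 v), fst p1 w * snd p2) \<in> fm_cone R"
        using 2 unfolding Rp_def by auto
      have "p1 \<in> R" "0 \<le> - fst p2 w" using 2 unfolding Rp_def Rn_def by auto
      from fm_cone.cone_step[of "fst p1" "snd p1", OF _ this(2) s2] this(1)
      show ?thesis unfolding 2 comb_def by simp
    qed
  qed
  have w0: "\<forall>q\<in>R'. fst q w = 0" unfolding R'_def R0_def comb_def by auto
  have "p \<in> fm_cone R" using cone_mono[of "fst p" "snd p", OF _ sub] p(1) by simp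
  moreover have "fst p w = 0" using cone_coord[of "fst p" "snd p", OF _ w0] p(1) by simp
  ultimately show ?case using p by auto
qed




lemma skew_strategy:
  fixes r :: "'a \<Rightarrow> 'a \<Rightarrow> real"
  assumes fin: "finite S" and ne: "S \<noteq> {}"
  shows "\<exists>m. (\<forall>y\<in>S. 0 \<le> m y) \<and> (\<Sum>y\<in>S. m y) = 1 \<and>
             (\<forall>x\<in>S. (\<Sum>y\<in>S. (r x y - r y x) * m y) \<le> 0)"
proof (rule ccontr)
  assume nex: "\<not> ?thesis"
  define R1 where "R1 = (\<lambda>x. ((\<lambda>y. r x y - r y x), 0::real)) ` S"
  define R2 where "R2 = (\<lambda>y. ((\<lambda>v. if v = y then -1 else 0::real), 0::real)) ` S"
  define R where "R = R1 \<union> R2 \<union> {((\<lambda>_. 1), 1), ((\<lambda>_. -1), -1)}"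
  have finR: "finite R" unfolding R_def R1_def R2_def using fin by auto
  have infeas: "\<not> (\<exists>x. \<forall>p\<in>R. (\<Sum>v\<in>S. fst p v * x v) \<le> snd p)"
  proof
    assume "\<exists>x. \<forall>p\<in>R. (\<Sum>v\<in>S. fst p v * x v) \<le> snd p"
    then obtain m where m: "\<forall>p\<in>R. (\<Sum>v\<in>S. fst p v * m v) \<le> snd p" by blast
    have "\<forall>y\<in>S. 0 \<le> m y"
    proof
      fix y assume y: "y \<in> S"
      then have "((\<lambda>v. if v = y then -1 else 0::real), 0::real) \<in> R" unfolding R_def R2_def by auto
      then have "(\<Sum>v\<in>S. (if v = y then -1 else 0) * m v) \<le> 0" using m by fastforce
      moreover have "(\<Sum>v\<in>S. (if v = y then -1 else 0) * m v) = (\<Sum>v\<in>S. if v = y then - m v else 0)"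
        by (intro sum.cong) auto
      ultimately show "0 \<le> m y" using y fin by simp
    qed
    moreover have "(\<Sum>y\<in>S. m y) = 1"
    proof -
      have "((\<lambda>_. 1), 1) \<in> R" "((\<lambda>_. -1), -1) \<in> R" unfolding R_def by auto
      then have "(\<Sum>v\<in>S. 1 * m v) \<le> 1" "(\<Sum>v\<in>S. -1 * m v) \<le> -1" using m by fastforce+
      then show ?thesis by (simp add: sum_negf)
    qed
    moreover have "\<forall>x\<in>S. (\<Sum>y\<in>S. (r x y - r y x) * m y) \<le> 0"
    proof
      fix x assume "x \<in> S"
      then have "((\<lambda>y. r x y - r y x), 0) \<in> R" unfolding R_def R1_def by auto
      then show "(\<Sum>y\<in>S. (r x y - r y x) * m y) \<le> 0" using m by fastforce
    qed
    ultimately show False using nex by blast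
  qed
  from fm[OF fin finR infeas] obtain p where p: "p \<in> fm_cone R" "\<forall>v\<in>S. fst p v = 0" "snd p < 0"
    by blast
  have rep: "\<exists>lam mu al be. (\<forall>x\<in>S. 0 \<le> lam x) \<and> (\<forall>x\<in>S. 0 \<le> mu x) \<and> 0 \<le> al \<and> 0 \<le> be \<and>
      (\<forall>v\<in>S. a v = (\<Sum>x\<in>S. lam x * (r x v - r v x)) - mu v + al - be) \<and> b = al - be"
    if "(a, b) \<in> fm_cone R" for a b
    using that
  proof (induction rule: fm_cone.induct)
    case cone_zero
    show ?case by (rule exI[of _ "\<lambda>_. 0"], rule exI[of _ "\<lambda>_. 0"]) auto
  next
    case (cone_step a b c a' b')
    from cone_step.IH obtain lam mu al be where H: "\<forall>x\<in>S. 0 \<le> lam x" "\<forall>x\<in>S. 0 \<le> mu x" "0 \<le> al" "0 \<le> be"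
      "\<forall>v\<in>S. a' v = (\<Sum>x\<in>S. lam x * (r x v - r v x)) - mu v + al - be" "b' = al - be" by blast
    from cone_step.hyps(1) consider (r1) x0 where "x0 \<in> S" "a = (\<lambda>y. r x0 y - r y x0)" "b = 0"
      | (r2) y0 where "y0 \<in> S" "a = (\<lambda>v. if v = y0 then -1 else 0)" "b = 0"
      | (r3) "a = (\<lambda>_. 1)" "b = 1" | (r4) "a = (\<lambda>_. -1)" "b = -1"
      unfolding R_def R1_def R2_def by auto
    then show ?case
    proof cases
      case r1
      show ?thesis
      proof (rule exI[of _ "\<lambda>x. lam x + (if x = x0 then c else 0)"], rule exI[of _ mu],
             rule exI[of _ al], rule exI[of _ be], intro conjI ballI)
        fix v assume v: "v \<in> S"
        have "(\<Sum>x\<in>S. (lam x + (if x = x0 then c else 0)) * (r x v - r v x)) =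
              (\<Sum>x\<in>S. lam x * (r x v - r v x)) + c * (r x0 v - r v x0)"
        proof -
          have "(\<Sum>x\<in>S. (lam x + (if x = x0 then c else 0)) * (r x v - r v x)) =
                (\<Sum>x\<in>S. lam x * (r x v - r v x) + (if x = x0 then c * (r x0 v - r v x0) else 0))"
            by (intro sum.cong) (auto simp: distrib_right)
          then show ?thesis using r1 fin by (simp add: sum.distrib)
        qed
        then show "c * a v + a' v = (\<Sum>x\<in>S. (lam x + (if x = x0 then c else 0)) * (r x v - r v x)) - mu v + al - be"
          using H v r1 by simp
      qed (use H cone_step r1 in auto)
    next
      case r2
      show ?thesis
      proof (rule exI[of _ lam], rule exI[of _ "\<lambda>x. mu x + (if x = y0 then c else 0)"],
             rule exI[of _ al], rule exI[of _ be], intro conjI ballI)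
        fix v assume v: "v \<in> S"
        show "c * a v + a' v = (\<Sum>x\<in>S. lam x * (r x v - r v x)) - (mu v + (if v = y0 then c else 0)) + al - be"
          using H v r2 by auto
      qed (use H cone_step r2 in auto)
    next
      case r3
      show ?thesis
        by (rule exI[of _ lam], rule exI[of _ mu], rule exI[of _ "al + c"], rule exI[of _ be])
           (use H cone_step r3 in auto)
    next
      case r4
      show ?thesis
        by (rule exI[of _ lam], rule exI[of _ mu], rule exI[of _ al], rule exI[of _ "be + c"])
           (use H cone_step r4 in auto)
    qed
  qed
  obtain lam mu al be where H: "\<forall>x\<in>S. 0 \<le> lam x" "\<forall>x\<in>S. 0 \<le> mu x" "0 \<le> al" "0 \<le> be"
      "\<forall>v\<in>S. fst p v = (\<Sum>x\<in>S. lam x * (r x v - r v x)) - mu v + al - be" "snd p = al - be"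
    using rep[of "fst p" "snd p"] p(1) by auto
  have pos: "\<forall>v\<in>S. (\<Sum>x\<in>S. lam x * (r x v - r v x)) > 0"
  proof
    fix v assume v: "v \<in> S"
    show "(\<Sum>x\<in>S. lam x * (r x v - r v x)) > 0" using H(2,5,6) p(2,3) v by fastforce
  qed
  define L where "L = (\<Sum>x\<in>S. lam x)"
  have "L \<noteq> 0"
  proof
    assume "L = 0"
    then have "\<forall>x\<in>S. lam x = 0" using H(1) fin unfolding L_def by (simp add: sum_nonneg_eq_0_iff)
    then show False using pos ne by auto
  qed
  then have Lpos: "L > 0" using H(1) unfolding L_def by (metis less_eq_real_def sum_nonneg)
  define m where "m x = lam x / L" for x
  have "\<forall>y\<in>S. 0 \<le> m y" using H(1) Lpos unfolding m_def by auto
  moreover have "(\<Sum>y\<in>S. m y) = 1" unfolding m_def L_def using Lpos[unfolded L_def]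
    by (simp add: sum_divide_distrib[symmetric])
  moreover have "\<forall>x\<in>S. (\<Sum>y\<in>S. (r x y - r y x) * m y) \<le> 0"
  proof
    fix v assume v: "v \<in> S"
    have "(\<Sum>y\<in>S. (r v y - r y v) * m y) = - (\<Sum>x\<in>S. lam x * (r x v - r v x)) / L"
      unfolding m_def by (simp add: sum_divide_distrib sum_negf[symmetric] algebra_simps diff_divide_distrib)
    also have "\<dots> < 0" using pos v Lpos by simp
    finally show "(\<Sum>y\<in>S. (r v y - r y v) * m y) \<le> 0" by simp
  qed
  ultimately show False using nex by blast
qed




lemma move_config:
  assumes "\<eta> \<in> config_space S N" "x \<in> S" "y \<in> S" "finite S" "x \<noteq> y"
  shows "move x y \<eta> \<in> config_space S N"
proof (cases "1 \<le> \<eta> x")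
  case False
  then show ?thesis using assms by (simp add: move_def)
next
  case True
  define \<eta>' where "\<eta>' = move x y \<eta>"
  have out: "\<forall>z. z \<notin> S \<longrightarrow> \<eta>' z = 0" using assms unfolding \<eta>'_def move_def config_space_def by auto
  have pt: "\<eta>' z + (if z = x then 1 else 0) = \<eta> z + (if z = y then 1 else 0)" for z
    using True assms(5) unfolding \<eta>'_def move_def by auto
  have "(\<Sum>z\<in>S. \<eta>' z + (if z = x then 1 else 0)) = (\<Sum>z\<in>S. \<eta> z + (if z = y then 1 else 0))"
    using pt by simp
  then have "(\<Sum>z\<in>S. \<eta>' z) + 1 = (\<Sum>z\<in>S. \<eta> z) + 1" using assms by (simp add: sum.distrib)
  then show ?thesis using out assms unfolding config_space_def \<eta>'_def[symmetric] by simp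
qed

lemma lfp_bound:
  fixes V :: "('a \<Rightarrow> nat) \<Rightarrow> real"
  assumes fin: "finite S"
    and Vnn: "\<forall>\<eta>\<in>config_space S N. 0 \<le> V \<eta>"
    and rate_nn: "\<forall>\<eta>\<in>config_space S N. \<forall>x\<in>S. \<forall>y\<in>S. 0 \<le> incl_rate r dN \<eta> x y"
    and drift: "\<forall>\<eta>\<in>config_space S N - U. 0 < incl_total_rate S r dN \<eta> \<and>
        1 + (\<Sum>(x,y)\<in>site_pairs S. incl_rate r dN \<eta> x y * (V (move x y \<eta>) - V \<eta>)) \<le> 0"
  shows "\<forall>\<eta>\<in>config_space S N. incl_expected_hitting_time S r dN U \<eta> \<le> ennreal (V \<eta>)"
proof -
  define g where "g \<eta> = (if \<eta> \<in> U then 0 else if \<eta> \<in> config_space S N then ennreal (V \<eta>) else top)"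
    for \<eta>
  have gle: "g \<eta> \<le> ennreal (V \<eta>)" if "\<eta> \<in> config_space S N" for \<eta> using that unfolding g_def by auto
  have step: "incl_hit_step S r dN U g \<le> g"
  proof (rule le_funI)
    fix \<eta>
    show "incl_hit_step S r dN U g \<eta> \<le> g \<eta>"
    proof (cases "\<eta> \<in> U")
      case True then show ?thesis by (simp add: incl_hit_step_def)
    next
      case notU: False
      show ?thesis
      proof (cases "\<eta> \<in> config_space S N")
        case False then show ?thesis using notU by (simp add: g_def)
      next
        case cfg: True
        define q where "q = incl_total_rate S r dN \<eta>"
        have D: "0 < q" "1 + (\<Sum>(x,y)\<in>site_pairs S. incl_rate r dN \<eta> x y * (V (move x y \<eta>) - V \<eta>)) \<le> 0"
          using drift cfg notU unfolding q_def by auto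
        have pairs: "x \<in> S" "y \<in> S" "x \<noteq> y" if "(x,y) \<in> site_pairs S" for x y
          using that unfolding site_pairs_def by auto
        have finP: "finite (site_pairs S)"
        proof -
          have "site_pairs S \<subseteq> S \<times> S" unfolding site_pairs_def by auto
          then show ?thesis using fin by (meson finite_SigmaI finite_subset)
        qed
        have rnn: "0 \<le> incl_rate r dN \<eta> x y" if "(x,y) \<in> site_pairs S" for x y
          using rate_nn cfg pairs[OF that] by auto
        have mv: "move x y \<eta> \<in> config_space S N" if "(x,y) \<in> site_pairs S" for x y
          using move_config[OF cfg pairs(1,2)[OF that] fin pairs(3)[OF that]] .
        have "(\<Sum>(x, y)\<in>site_pairs S. ennreal (incl_rate r dN \<eta> x y / q) * g (move x y \<eta>))
            \<le> (\<Sum>(x, y)\<in>site_pairs S. ennreal (incl_rate r dN \<eta> x y / q * V (move x y \<eta>)))"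
        proof (rule sum_mono)
          fix p assume p: "p \<in> site_pairs S"
          obtain x y where xy: "p = (x,y)" by (cases p)
          have "ennreal (incl_rate r dN \<eta> x y / q) * g (move x y \<eta>)
              \<le> ennreal (incl_rate r dN \<eta> x y / q) * ennreal (V (move x y \<eta>))"
            using gle[OF mv] p xy by (auto intro: mult_left_mono)
          also have "\<dots> = ennreal (incl_rate r dN \<eta> x y / q * V (move x y \<eta>))"
            using Vnn mv[of x y] p xy by (subst ennreal_mult'') auto
          finally show "(case p of (x, y) \<Rightarrow> ennreal (incl_rate r dN \<eta> x y / q) * g (move x y \<eta>))
            \<le> (case p of (x, y) \<Rightarrow> ennreal (incl_rate r dN \<eta> x y / q * V (move x y \<eta>)))"
            using xy by simp
        qed
        also have "\<dots> = ennreal (\<Sum>(x, y)\<in>site_pairs S. incl_rate r dN \<eta> x y / q * V (move x y \<eta>))"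
          by (subst sum_ennreal[symmetric]) (use rnn Vnn mv D in \<open>auto intro!: sum.cong\<close>)
        finally have S1: "(\<Sum>(x, y)\<in>site_pairs S. ennreal (incl_rate r dN \<eta> x y / q) * g (move x y \<eta>))
            \<le> ennreal (\<Sum>(x, y)\<in>site_pairs S. incl_rate r dN \<eta> x y / q * V (move x y \<eta>))" .
        have real_ineq: "1 / q + (\<Sum>(x, y)\<in>site_pairs S. incl_rate r dN \<eta> x y / q * V (move x y \<eta>)) \<le> V \<eta>"
        proof -
          have e1: "(\<Sum>(x,y)\<in>site_pairs S. incl_rate r dN \<eta> x y * (V (move x y \<eta>) - V \<eta>))
             = (\<Sum>(x,y)\<in>site_pairs S. incl_rate r dN \<eta> x y * V (move x y \<eta>)) - q * V \<eta>"
            unfolding q_def incl_total_rate_def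
            by (simp add: right_diff_distrib sum_subtractf sum_distrib_right case_prod_beta)
          have e2: "(\<Sum>(x, y)\<in>site_pairs S. incl_rate r dN \<eta> x y / q * V (move x y \<eta>))
             = (\<Sum>(x,y)\<in>site_pairs S. incl_rate r dN \<eta> x y * V (move x y \<eta>)) / q"
            by (simp add: sum_divide_distrib case_prod_beta)
          have "1 + (\<Sum>(x,y)\<in>site_pairs S. incl_rate r dN \<eta> x y * V (move x y \<eta>)) \<le> q * V \<eta>"
            using D(2) e1 by simp
          then show ?thesis using D(1) unfolding e2 by (simp add: field_simps)
        qed
        have "incl_hit_step S r dN U g \<eta> = inverse (ennreal q) +
            (\<Sum>(x, y)\<in>site_pairs S. ennreal (incl_rate r dN \<eta> x y / q) * g (move x y \<eta>))"
          using notU unfolding incl_hit_step_def q_def by simp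
        also have "\<dots> \<le> ennreal (1/q) + ennreal (\<Sum>(x, y)\<in>site_pairs S. incl_rate r dN \<eta> x y / q * V (move x y \<eta>))"
          using S1 D(1) by (simp add: inverse_ennreal add_left_mono inverse_eq_divide)
        also have "\<dots> = ennreal (1/q + (\<Sum>(x, y)\<in>site_pairs S. incl_rate r dN \<eta> x y / q * V (move x y \<eta>)))"
          using D(1) rnn Vnn mv by (subst ennreal_plus) (auto intro!: sum_nonneg)
        also have "\<dots> \<le> ennreal (V \<eta>)" using real_ineq by (rule ennreal_leI)
        finally show ?thesis using notU cfg by (simp add: g_def)
      qed
    qed
  qed
  have "incl_expected_hitting_time S r dN U \<le> g"
    unfolding incl_expected_hitting_time_def by (rule lfp_lowerbound[of "incl_hit_step S r dN U" g, OF step])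
  then have "incl_expected_hitting_time S r dN U \<eta> \<le> g \<eta>" for \<eta> by (rule le_funD)
  then show ?thesis using gle order_trans by blast
qed




lemma finite_site_pairs: "finite S \<Longrightarrow> finite (site_pairs S)"
proof -
  assume "finite S"
  moreover have "site_pairs S \<subseteq> S \<times> S" unfolding site_pairs_def by auto
  ultimately show ?thesis by (meson finite_SigmaI finite_subset)
qed

lemma site_pairs_Sigma: "site_pairs S = Sigma S (\<lambda>x. S - {x})"
  unfolding site_pairs_def by auto

lemma sum_pairs: "finite S \<Longrightarrow> (\<Sum>(x,y)\<in>site_pairs S. f x y) = (\<Sum>x\<in>S. \<Sum>y\<in>S-{x}. f x y)"
  unfolding site_pairs_Sigma by (subst sum.Sigma) auto

lemma sum_pairs_split:
  fixes f :: "'a \<Rightarrow> 'a \<Rightarrow> real"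
  assumes "finite S" "x0 \<in> S"
  shows "(\<Sum>(x,y)\<in>site_pairs S. f x y * (if x = x0 then \<alpha> else if y = x0 then \<beta> else 0))
     = \<alpha> * (\<Sum>y\<in>S-{x0}. f x0 y) + \<beta> * (\<Sum>x\<in>S-{x0}. f x x0)"
proof -
  have inner: "(\<Sum>y\<in>S-{x}. f x y * (if x = x0 then \<alpha> else if y = x0 then \<beta> else 0)) = \<beta> * f x x0"
    if "x \<in> S - {x0}" for x
  proof -
    have "(\<Sum>y\<in>S-{x}. f x y * (if x = x0 then \<alpha> else if y = x0 then \<beta> else 0))
        = (\<Sum>y\<in>S-{x}. if y = x0 then \<beta> * f x x0 else 0)"
      using that by (intro sum.cong) auto
    also have "\<dots> = \<beta> * f x x0" using that assms by (auto simp: sum.delta')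
    finally show ?thesis .
  qed
  have "(\<Sum>(x,y)\<in>site_pairs S. f x y * (if x = x0 then \<alpha> else if y = x0 then \<beta> else 0))
      = (\<Sum>x\<in>S. \<Sum>y\<in>S-{x}. f x y * (if x = x0 then \<alpha> else if y = x0 then \<beta> else 0))"
    using sum_pairs[OF assms(1)] by simp
  also have "\<dots> = (\<Sum>y\<in>S-{x0}. f x0 y * \<alpha>) + (\<Sum>x\<in>S-{x0}. \<Sum>y\<in>S-{x}. f x y * (if x = x0 then \<alpha> else if y = x0 then \<beta> else 0))"
    using assms by (subst sum.remove[of S x0]) auto
  also have "\<dots> = \<alpha> * (\<Sum>y\<in>S-{x0}. f x0 y) + \<beta> * (\<Sum>x\<in>S-{x0}. f x x0)"
    using inner by (simp add: sum_distrib_left mult.commute)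
  finally show ?thesis .
qed

lemma config_le: "\<eta> \<in> config_space S N \<Longrightarrow> finite S \<Longrightarrow> \<eta> x \<le> N"
  unfolding config_space_def
  by (cases "x \<in> S") (auto intro: member_le_sum[of x S \<eta>, simplified])

lemma small_N:
  fixes S :: "'a set" and r :: "'a \<Rightarrow> 'a \<Rightarrow> real" and dN :: real
  assumes fin: "finite S" and card: "card S \<ge> 2"
    and rnn: "\<And>x y. x \<in> S \<Longrightarrow> y \<in> S \<Longrightarrow> r x y \<ge> 0"
    and rpos: "\<And>x y. x \<in> S \<Longrightarrow> y \<in> S \<Longrightarrow> x \<noteq> y \<Longrightarrow> r x y > 0"
    and dpos: "dN > 0"
    and offU: "\<forall>\<eta>\<in>config_space S N - U. \<forall>x\<in>S. 1 \<le> \<eta> x"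
  shows "\<exists>B. \<forall>\<eta>\<in>config_space S N. incl_expected_hitting_time S r dN U \<eta> \<le> ennreal B"
proof -
  obtain x0 y1 where xy: "x0 \<in> S" "y1 \<in> S" "x0 \<noteq> y1"
  proof -
    have "S \<noteq> {}" using card by auto
    then obtain x0 where x0: "x0 \<in> S" by auto
    have "card (S - {x0}) \<ge> 1" using card x0 fin by simp
    then have "S - {x0} \<noteq> {}" by (metis card.empty not_one_le_zero)
    then obtain y1 where "y1 \<in> S - {x0}" by auto
    then show ?thesis using that x0 by auto
  qed
  define r0 where "r0 = r x0 y1"
  have r0: "r0 > 0" using rpos xy unfolding r0_def by auto
  define Rin where "Rin = (\<Sum>x\<in>S-{x0}. r x x0)"
  have Rin: "Rin \<ge> 0" unfolding Rin_def using rnn xy by (auto intro: sum_nonneg)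
  define Qm where "Qm = real N * (dN + real N) * Rin"
  have Qm: "Qm \<ge> 0" unfolding Qm_def using Rin dpos by auto
  define \<theta> where "\<theta> = dN * r0 / (2 * (Qm + dN * r0))"
  have dr0: "dN * r0 > 0" using dpos r0 by auto
  have th0: "\<theta> > 0" unfolding \<theta>_def using dr0 Qm by auto
  have th1: "\<theta> \<le> 1/2" unfolding \<theta>_def using dr0 Qm by (simp add: divide_simps)
  have thQ: "\<theta> * Qm \<le> dN * r0 / 2"
  proof -
    have "\<theta> * Qm = dN * r0 * Qm / (2 * (Qm + dN * r0))" unfolding \<theta>_def by simp
    also have "\<dots> \<le> dN * r0 * (Qm + dN * r0) / (2 * (Qm + dN * r0))"
      using dr0 Qm by (intro divide_right_mono mult_left_mono) auto
    also have "\<dots> = dN * r0 / 2"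
    proof -
      have z: "Qm + dN * r0 > 0" using dr0 Qm by simp
      have "\<And>a z::real. z > 0 \<Longrightarrow> a * z / (2 * z) = a / 2" by simp
      from this[OF z] show ?thesis .
    qed

    finally show ?thesis .
  qed
  define B where "B = 4 / (\<theta> ^ N * (dN * r0))"
  have Bpos: "B > 0" unfolding B_def using th0 dr0 by auto
  define V where "V \<eta> = B * (1 - \<theta> ^ (\<eta> x0))" for \<eta> :: "'a \<Rightarrow> nat"
  have Vnn: "\<forall>\<eta>\<in>config_space S N. 0 \<le> V \<eta>"
  proof
    fix \<eta> :: "'a \<Rightarrow> nat"
    have "\<theta> ^ (\<eta> x0) \<le> 1" using th0 th1 by (simp add: power_le_one)
    then show "0 \<le> V \<eta>" unfolding V_def using Bpos by simp
  qed
  have rate_nn: "\<forall>\<eta>\<in>config_space S N. \<forall>x\<in>S. \<forall>y\<in>S. 0 \<le> incl_rate r dN \<eta> x y"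
    using rnn dpos unfolding incl_rate_def by auto
  have drift: "\<forall>\<eta>\<in>config_space S N - U. 0 < incl_total_rate S r dN \<eta> \<and>
        1 + (\<Sum>(x,y)\<in>site_pairs S. incl_rate r dN \<eta> x y * (V (move x y \<eta>) - V \<eta>)) \<le> 0"
  proof
    fix \<eta> assume \<eta>: "\<eta> \<in> config_space S N - U"
    have pos: "\<forall>x\<in>S. 1 \<le> \<eta> x" using offU \<eta> by auto
    have cfg: "\<eta> \<in> config_space S N" using \<eta> by auto
    define k where "k = \<eta> x0"
    have k1: "1 \<le> k" using pos xy unfolding k_def by auto
    have kN: "k \<le> N" using config_le[OF cfg fin] unfolding k_def by auto
    define \<alpha> where "\<alpha> = - B * (1 - \<theta>) * \<theta> ^ (k - 1)"
    define \<beta> where "\<beta> = B * (1 - \<theta>) * \<theta> ^ k"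
    have pk: "\<theta> ^ k = \<theta> * \<theta> ^ (k - 1)" using k1 by (metis Suc_diff_le diff_Suc_1 power_Suc)
    have dV: "V (move x y \<eta>) - V \<eta> = (if x = x0 then \<alpha> else if y = x0 then \<beta> else 0)"
      if "(x,y) \<in> site_pairs S" for x y
    proof -
      have x: "x \<in> S" "x \<noteq> y" using that unfolding site_pairs_def by auto
      have m: "move x y \<eta> x0 = (if x = x0 then k - 1 else if y = x0 then k + 1 else k)"
        using pos x unfolding move_def k_def by auto
      show ?thesis
      proof (cases "x = x0")
        case True
        then show ?thesis using m unfolding V_def \<alpha>_def k_def[symmetric] by (simp add: pk algebra_simps)
      next
        case False
        then show ?thesis using m unfolding V_def \<beta>_def k_def[symmetric] by (simp add: algebra_simps)
      qed
    qed
    define Pout where "Pout = (\<Sum>y\<in>S-{x0}. incl_rate r dN \<eta> x0 y)"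
    define Pin where "Pin = (\<Sum>x\<in>S-{x0}. incl_rate r dN \<eta> x x0)"
    have sumeq: "(\<Sum>(x,y)\<in>site_pairs S. incl_rate r dN \<eta> x y * (V (move x y \<eta>) - V \<eta>))
        = \<alpha> * Pout + \<beta> * Pin"
    proof -
      have "(\<Sum>(x,y)\<in>site_pairs S. incl_rate r dN \<eta> x y * (V (move x y \<eta>) - V \<eta>))
         = (\<Sum>(x,y)\<in>site_pairs S. incl_rate r dN \<eta> x y * (if x = x0 then \<alpha> else if y = x0 then \<beta> else 0))"
        using dV by (intro sum.cong) auto
      also have "\<dots> = \<alpha> * Pout + \<beta> * Pin" unfolding Pout_def Pin_def
        by (rule sum_pairs_split[OF fin xy(1)])
      finally show ?thesis .
    qed
    have r01: "incl_rate r dN \<eta> x0 y1 \<ge> dN * r0"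
    proof -
      have "real (\<eta> x0) * (dN + real (\<eta> y1)) \<ge> 1 * dN" using pos xy dpos
        by (intro mult_mono) auto
      then show ?thesis unfolding incl_rate_def r0_def using r0[unfolded r0_def]
        by (simp add: mult_right_mono)
    qed
    have Pout: "Pout \<ge> dN * r0"
    proof -
      have "incl_rate r dN \<eta> x0 y1 \<le> Pout" unfolding Pout_def
        by (rule member_le_sum) (use xy rate_nn cfg fin in auto)
      then show ?thesis using r01 by simp
    qed
    have Pin: "Pin \<le> Qm"
    proof -
      have "Pin \<le> (\<Sum>x\<in>S-{x0}. real N * (dN + real N) * r x x0)" unfolding Pin_def
      proof (rule sum_mono)
        fix x assume x: "x \<in> S - {x0}"
        have "real (\<eta> x) * (dN + real (\<eta> x0)) \<le> real N * (dN + real N)"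
          using config_le[OF cfg fin, of x] config_le[OF cfg fin, of x0] dpos
          by (intro mult_mono) auto
        then show "incl_rate r dN \<eta> x x0 \<le> real N * (dN + real N) * r x x0"
          unfolding incl_rate_def using rnn x xy by (intro mult_right_mono) auto
      qed
      then show ?thesis unfolding Qm_def Rin_def by (simp add: sum_distrib_left)
    qed
    have PinNN: "Pin \<ge> 0" unfolding Pin_def using rate_nn cfg xy by (auto intro: sum_nonneg)
    have tk: "\<theta> ^ (k - 1) \<ge> \<theta> ^ N" using th0 th1 kN by (intro power_decreasing) auto
    have "\<alpha> * Pout + \<beta> * Pin = B * (1 - \<theta>) * \<theta> ^ (k - 1) * (\<theta> * Pin - Pout)"
      unfolding \<alpha>_def \<beta>_def pk by (simp add: algebra_simps)
    also have "\<dots> \<le> B * (1 - \<theta>) * \<theta> ^ (k - 1) * (- (dN * r0 / 2))"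
    proof (rule mult_left_mono)
      have "\<theta> * Pin \<le> \<theta> * Qm" using Pin th0 by (simp add: mult_left_mono)
      then show "\<theta> * Pin - Pout \<le> - (dN * r0 / 2)" using thQ Pout by simp
      show "0 \<le> B * (1 - \<theta>) * \<theta> ^ (k - 1)" using Bpos th0 th1 by simp
    qed
    also have "\<dots> \<le> B * (1/2) * \<theta> ^ N * (- (dN * r0 / 2))"
    proof -
      have "B * (1/2) * \<theta> ^ N \<le> B * (1 - \<theta>) * \<theta> ^ (k - 1)"
        using Bpos th0 th1 tk by (intro mult_mono) auto
      then show ?thesis by (rule mult_right_mono_neg) (use dr0 in simp)
    qed
    also have "\<dots> = -1" unfolding B_def using th0 dpos r0 by (simp add: field_simps)
    finally have main: "\<alpha> * Pout + \<beta> * Pin \<le> -1" .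
    have qpos: "0 < incl_total_rate S r dN \<eta>"
    proof -
      have mem: "(x0,y1) \<in> site_pairs S" unfolding site_pairs_def using xy by auto
      have nn: "\<And>p. p \<in> site_pairs S - {(x0,y1)} \<Longrightarrow> 0 \<le> (\<lambda>(x,y). incl_rate r dN \<eta> x y) p"
        using rate_nn cfg by (auto simp: site_pairs_def)
      from member_le_sum[of "(x0,y1)" "site_pairs S" "\<lambda>(x,y). incl_rate r dN \<eta> x y", OF mem nn finite_site_pairs[OF fin]]
      have "incl_rate r dN \<eta> x0 y1 \<le> incl_total_rate S r dN \<eta>"
        unfolding incl_total_rate_def by simp
      then show ?thesis using r01 dr0 by simp
    qed
    show "0 < incl_total_rate S r dN \<eta> \<and>
        1 + (\<Sum>(x,y)\<in>site_pairs S. incl_rate r dN \<eta> x y * (V (move x y \<eta>) - V \<eta>)) \<le> 0"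
      using qpos main sumeq by simp
  qed
  have "\<forall>\<eta>\<in>config_space S N. incl_expected_hitting_time S r dN U \<eta> \<le> ennreal (V \<eta>)"
    by (rule lfp_bound[OF fin Vnn rate_nn drift])
  moreover have "V \<eta> \<le> B" for \<eta> unfolding V_def using Bpos th0 by simp
  ultimately show ?thesis by (meson ennreal_leI order_trans)
qed




lemma ln_minus_bound:
  fixes u :: real assumes u: "u \<ge> 2"
  shows "ln (u - 1) - ln u \<le> - 1/u - 1/(4*u^2)"
proof -
  define t where "t = 1/u"
  have t0: "0 < t" "t \<le> 1/2" using u unfolding t_def by (auto simp: field_simps)
  define w where "w = 1 - t/2 - t^2/8"
  have "t^2 \<le> t" using t0 by (simp add: power2_eq_square mult_left_le)
  then have w0: "w > 0" unfolding w_def using t0 by simp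
  have "1 - t \<le> w^2"
  proof -
    have "w^2 = 1 - t + t^3/8 + t^4/64" unfolding w_def by (simp add: power2_eq_square power3_eq_cube algebra_simps power4_eq_xxxx)
    then show ?thesis using t0 by (simp add: zero_le_power)
  qed
  moreover have "1 - t > 0" using t0 by simp
  ultimately have "ln (1 - t) \<le> ln (w^2)" using w0 by (subst ln_le_cancel_iff) auto
  also have "\<dots> = 2 * ln w" using w0 by (simp add: ln_realpow)
  also have "\<dots> \<le> 2 * (w - 1)" using ln_le_minus_one[OF w0] by simp
  also have "\<dots> = - t - t^2/4" unfolding w_def by (simp add: algebra_simps)
  finally have A: "ln (1 - t) \<le> - t - t^2/4" .
  have "ln (u - 1) - ln u = ln ((u - 1) / u)" using u by (simp add: ln_divide_pos)
  also have "(u - 1) / u = 1 - t" unfolding t_def using u by (simp add: field_simps)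
  finally show ?thesis using A unfolding t_def by (simp add: power_divide)
qed

lemma ln_plus_bound:
  fixes u :: real assumes u: "u > 0"
  shows "ln (u + 1) - ln u \<le> 1/u"
proof -
  have "(u + 1) / u = 1 + 1/u" using u by (simp add: field_simps)
  moreover have "ln ((u + 1) / u) = ln (u + 1) - ln u" using u by (intro ln_divide_pos) auto
  ultimately have "ln (u + 1) - ln u = ln (1 + 1/u)" by simp
  also have "\<dots> \<le> 1/u" using u by (intro ln_add_one_self_le_self) simp
  finally show ?thesis .
qed

lemma pair_bound:
  fixes ex ey mx my d r l N :: real
  assumes "ex > l" "ey > l" "l \<ge> 2" "ex \<le> N" "ey \<le> N" "0 \<le> mx" "0 \<le> my" "my \<le> 1" "d > 0" "r \<ge> 0"
  shows "ex * (d + ey) * r * (my/ey - mx/ex - mx/(4*ex^2))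
     \<le> r*ex*my - r*ey*mx + d*r*N/l - r*mx*l/(4*N)"
proof -
  have pos: "ex > 0" "ey > 0" "N > 0" "l > 0" using assms by auto
  have e: "ex * (d + ey) * r * (my/ey - mx/ex - mx/(4*ex^2))
     = r*ex*my + d*r*(ex*my/ey) - r*mx*d - r*ey*mx - r*mx*((d+ey)/(4*ex))"
    using pos by (simp add: field_simps power2_eq_square)
  have b1: "ex*my/ey \<le> N/l"
  proof -
    have "ex*my \<le> N*1" using assms pos by (intro mult_mono) auto
    then have "ex*my/ey \<le> N/ey" using pos by (simp add: divide_right_mono)
    also have "\<dots> \<le> N/l" using pos assms by (intro divide_left_mono) auto
    finally show ?thesis .
  qed
  have b2: "ey/(4*ex) \<ge> l/(4*N)"
    using pos assms by (intro frac_le) auto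
  have b3: "(d+ey)/(4*ex) \<ge> ey/(4*ex)" using pos assms by (intro divide_right_mono) auto
  have "d*r*(ex*my/ey) \<le> d*r*(N/l)" using b1 assms by (intro mult_left_mono) auto
  moreover have "r*mx*((d+ey)/(4*ex)) \<ge> r*mx*(l/(4*N))" using b2 b3 assms by (intro mult_left_mono) auto
  moreover have "r*mx*d \<ge> 0" using assms by auto
  ultimately show ?thesis unfolding e by simp
qed




lemma T1:
  fixes r :: "'a \<Rightarrow> 'a \<Rightarrow> real" and e m :: "'a \<Rightarrow> real"
  assumes fin: "finite S" and m: "\<forall>x\<in>S. (\<Sum>y\<in>S. (r x y - r y x) * m y) \<le> 0"
    and e: "\<forall>x\<in>S. 0 \<le> e x"
  shows "(\<Sum>(x,y)\<in>site_pairs S. r x y * e x * m y - r x y * e y * m x) \<le> 0"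
proof -
  define g where "g x y = r x y * e x * m y - r x y * e y * m x" for x y
  have "(\<Sum>(x,y)\<in>site_pairs S. r x y * e x * m y - r x y * e y * m x) = (\<Sum>x\<in>S. \<Sum>y\<in>S-{x}. g x y)"
    unfolding g_def by (rule sum_pairs[OF fin])
  also have "\<dots> = (\<Sum>x\<in>S. \<Sum>y\<in>S. g x y)"
  proof (rule sum.cong)
    fix x assume x: "x \<in> S"
    show "(\<Sum>y\<in>S-{x}. g x y) = (\<Sum>y\<in>S. g x y)"
      using sum.remove[OF fin x, of "g x"] by (simp add: g_def)
  qed simp
  also have "\<dots> = (\<Sum>x\<in>S. \<Sum>y\<in>S. r x y * e x * m y) - (\<Sum>x\<in>S. \<Sum>y\<in>S. r x y * e y * m x)"
    unfolding g_def by (simp add: sum_subtractf)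
  also have "(\<Sum>x\<in>S. \<Sum>y\<in>S. r x y * e y * m x) = (\<Sum>y\<in>S. \<Sum>x\<in>S. r x y * e y * m x)"
    by (rule sum.swap)
  also have "(\<Sum>x\<in>S. \<Sum>y\<in>S. r x y * e x * m y) - (\<Sum>y\<in>S. \<Sum>x\<in>S. r x y * e y * m x)
      = (\<Sum>x\<in>S. e x * (\<Sum>y\<in>S. (r x y - r y x) * m y))"
    by (simp add: sum_subtractf[symmetric] sum_distrib_left algebra_simps)
  also have "\<dots> \<le> 0" using m e by (intro sum_nonpos) (simp add: mult_nonneg_nonpos)
  finally show ?thesis .
qed

lemma pairs_mx:
  fixes r :: "'a \<Rightarrow> 'a \<Rightarrow> real" and m :: "'a \<Rightarrow> real"
  assumes fin: "finite S" and card: "card S \<ge> 2"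
    and rmin: "\<forall>x\<in>S. \<forall>y\<in>S. x \<noteq> y \<longrightarrow> rmin \<le> r x y" "rmin > 0"
    and m: "\<forall>y\<in>S. 0 \<le> m y" "(\<Sum>y\<in>S. m y) = 1"
  shows "(\<Sum>(x,y)\<in>site_pairs S. r x y * m x) \<ge> rmin"
proof -
  have "(\<Sum>(x,y)\<in>site_pairs S. r x y * m x) = (\<Sum>x\<in>S. \<Sum>y\<in>S-{x}. r x y * m x)"
    by (rule sum_pairs[OF fin])
  also have "\<dots> \<ge> (\<Sum>x\<in>S. rmin * m x)"
  proof (rule sum_mono)
    fix x assume x: "x \<in> S"
    have "card (S - {x}) \<ge> 1" using card x fin by simp
    then obtain y where y: "y \<in> S - {x}" by (metis all_not_in_conv card.empty not_one_le_zero)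
    have "rmin * m x \<le> r x y * m x" using rmin m x y by (intro mult_right_mono) auto
    also have "\<dots> \<le> (\<Sum>y\<in>S-{x}. r x y * m x)"
    proof (rule member_le_sum)
      fix z assume z: "z \<in> S - {x} - {y}"
      then have "rmin \<le> r x z" using rmin x by auto
      then have "0 \<le> r x z" using rmin(2) by linarith
      then show "0 \<le> r x z * m x" using m x by simp
    qed (use y fin in auto)
    finally show "rmin * m x \<le> (\<Sum>y\<in>S-{x}. r x y * m x)" .
  qed
  also have "(\<Sum>x\<in>S. rmin * m x) = rmin" using m by (simp add: sum_distrib_left[symmetric])
  finally show ?thesis .
qed

lemma large_N:
  fixes S :: "'a set" and r :: "'a \<Rightarrow> 'a \<Rightarrow> real" and dN l rmin :: real and m :: "'a \<Rightarrow> real"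
  assumes fin: "finite S" and card: "card S \<ge> 2"
    and rnn: "\<And>x y. x \<in> S \<Longrightarrow> y \<in> S \<Longrightarrow> r x y \<ge> 0"
    and dpos: "dN > 0"
    and rmin: "\<forall>x\<in>S. \<forall>y\<in>S. x \<noteq> y \<longrightarrow> rmin \<le> r x y" "rmin > 0"
    and m: "\<forall>y\<in>S. 0 \<le> m y" "(\<Sum>y\<in>S. m y) = 1" "\<forall>x\<in>S. (\<Sum>y\<in>S. (r x y - r y x) * m y) \<le> 0"
    and l: "l \<ge> 2" "l \<le> real N"
    and dcond: "dN * real N * (\<Sum>(x,y)\<in>site_pairs S. r x y) / l \<le> rmin * l / (8 * real N)"
    and offU: "\<forall>\<eta>\<in>config_space S N - U. \<forall>x\<in>S. l < real (\<eta> x)"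
  shows "\<forall>\<eta>\<in>config_space S N. incl_expected_hitting_time S r dN U \<eta>
            \<le> ennreal (8 * real N / (rmin * l) * ln (real N / (l - 1)))"
proof -
  define a where "a = l - 1"
  have a1: "a \<ge> 1" unfolding a_def using l by simp
  have Npos: "real N > 0" using l by simp
  define K where "K = 8 * real N / (rmin * l)"
  have Kpos: "K > 0" unfolding K_def using Npos rmin l by simp
  define W where "W \<eta> = (\<Sum>x\<in>S. m x * (ln (real (\<eta> x)) - ln a))" for \<eta> :: "'a \<Rightarrow> nat"
  define V where "V \<eta> = max 0 (K * W \<eta>)" for \<eta>
  have Vnn: "\<forall>\<eta>\<in>config_space S N. 0 \<le> V \<eta>" unfolding V_def by simp
  have rate_nn: "\<forall>\<eta>\<in>config_space S N. \<forall>x\<in>S. \<forall>y\<in>S. 0 \<le> incl_rate r dN \<eta> x y"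
    using rnn dpos unfolding incl_rate_def by auto
  have Wnn: "W \<zeta> \<ge> 0" if "\<forall>z\<in>S. a \<le> real (\<zeta> z)" for \<zeta>
    unfolding W_def using that m a1 by (intro sum_nonneg mult_nonneg_nonneg) auto
  have Vbound: "V \<eta> \<le> K * ln (real N / a)" if "\<eta> \<in> config_space S N" for \<eta>
  proof -
    have "W \<eta> \<le> (\<Sum>x\<in>S. m x * (ln (real N) - ln a))" unfolding W_def
    proof (rule sum_mono)
      fix x assume x: "x \<in> S"
      have "ln (real (\<eta> x)) \<le> ln (real N)"
      proof (cases "\<eta> x = 0")
        case True then show ?thesis using Npos by simp
      next
        case False then show ?thesis using config_le[OF that fin, of x] by simp
      qed
      then show "m x * (ln (real (\<eta> x)) - ln a) \<le> m x * (ln (real N) - ln a)"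
        using m x by (intro mult_left_mono) auto
    qed
    also have "\<dots> = ln (real N / a)" using m a1 Npos by (simp add: sum_distrib_right[symmetric] ln_divide_pos)
    finally have "W \<eta> \<le> ln (real N / a)" .
    moreover have "ln (real N / a) \<ge> 0" using a1 l unfolding a_def by simp
    ultimately show ?thesis unfolding V_def using Kpos by (simp add: mult_left_mono)
  qed
  define Rs where "Rs = (\<Sum>(x,y)\<in>site_pairs S. r x y)"
  have drift: "\<forall>\<eta>\<in>config_space S N - U. 0 < incl_total_rate S r dN \<eta> \<and>
        1 + (\<Sum>(x,y)\<in>site_pairs S. incl_rate r dN \<eta> x y * (V (move x y \<eta>) - V \<eta>)) \<le> 0"
  proof
    fix \<eta> assume \<eta>: "\<eta> \<in> config_space S N - U"
    have pos: "\<forall>x\<in>S. l < real (\<eta> x)" using offU \<eta> by auto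
    have cfg: "\<eta> \<in> config_space S N" using \<eta> by auto
    have ge1: "1 \<le> \<eta> x" if "x \<in> S" for x using pos that l by fastforce
    have leN: "real (\<eta> x) \<le> real N" for x using config_le[OF cfg fin, of x] by simp
    have mle1: "m y \<le> 1" if "y \<in> S" for y
      using member_le_sum[of y S m] m that fin by auto
    have mvform: "move x y \<eta> z = (if z = x then \<eta> x - 1 else if z = y then \<eta> y + 1 else \<eta> z)"
      if "(x,y) \<in> site_pairs S" for x y z
      using that ge1 unfolding site_pairs_def move_def by auto
    have Vmv: "V (move x y \<eta>) = K * W (move x y \<eta>)" if "(x,y) \<in> site_pairs S" for x y
    proof -
      have "\<forall>z\<in>S. a \<le> real (move x y \<eta> z)"
      proof
        fix z assume z: "z \<in> S"
        have "real (move x y \<eta> z) \<ge> real (\<eta> z) - 1"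
          using mvform[OF that, of z] ge1 that unfolding site_pairs_def by (auto simp: of_nat_diff)
        moreover have "l < real (\<eta> z)" using pos z by blast
        ultimately show "a \<le> real (move x y \<eta> z)" unfolding a_def by linarith
      qed
      then show ?thesis unfolding V_def using Wnn Kpos by simp
    qed
    have Veta: "V \<eta> = K * W \<eta>"
    proof -
      have "\<forall>z\<in>S. a \<le> real (\<eta> z)" using pos unfolding a_def by force
      then show ?thesis unfolding V_def using Wnn Kpos by simp
    qed
    define c where "c x y = m y / real (\<eta> y) - m x / real (\<eta> x) - m x / (4 * real (\<eta> x)^2)" for x y
    have dW: "W (move x y \<eta>) - W \<eta> \<le> c x y" if xy: "(x,y) \<in> site_pairs S" for x y
    proof -
      have x: "x \<in> S" "y \<in> S" "x \<noteq> y" using xy unfolding site_pairs_def by auto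
      define A where "A = m x * (ln (real (\<eta> x) - 1) - ln (real (\<eta> x)))"
      define B where "B = m y * (ln (real (\<eta> y) + 1) - ln (real (\<eta> y)))"
      have "W (move x y \<eta>) - W \<eta> = (\<Sum>z\<in>S. m z * (ln (real (move x y \<eta> z)) - ln (real (\<eta> z))))"
        unfolding W_def by (simp add: sum_subtractf[symmetric] algebra_simps)
      also have "\<dots> = (\<Sum>z\<in>S. (if z = x then A else 0) + (if z = y then B else 0))"
      proof (rule sum.cong)
        fix z assume "z \<in> S"
        show "m z * (ln (real (move x y \<eta> z)) - ln (real (\<eta> z))) = (if z = x then A else 0) + (if z = y then B else 0)"
          using mvform[OF xy, of z] ge1[OF x(1)] x(3) unfolding A_def B_def by (auto simp: of_nat_diff)
      qed simp
      also have "\<dots> = A + B" using x fin by (simp add: sum.distrib)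
      also have "\<dots> \<le> m x * (- 1 / real (\<eta> x) - 1 / (4 * real (\<eta> x)^2)) + m y * (1 / real (\<eta> y))"
      proof (rule add_mono)
        show "A \<le> m x * (- 1 / real (\<eta> x) - 1 / (4 * real (\<eta> x)^2))"
          unfolding A_def using ln_minus_bound[of "real (\<eta> x)"] pos x l m
          by (intro mult_left_mono) auto
        show "B \<le> m y * (1 / real (\<eta> y))"
          unfolding B_def using ln_plus_bound[of "real (\<eta> y)"] pos x l m
          by (intro mult_left_mono) auto
      qed
      also have "\<dots> = c x y" unfolding c_def by (simp add: algebra_simps)
      finally show ?thesis .
    qed
    have "(\<Sum>(x,y)\<in>site_pairs S. incl_rate r dN \<eta> x y * (V (move x y \<eta>) - V \<eta>))
        = K * (\<Sum>(x,y)\<in>site_pairs S. incl_rate r dN \<eta> x y * (W (move x y \<eta>) - W \<eta>))"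
      by (simp add: sum_distrib_left Vmv Veta case_prod_beta algebra_simps cong: sum.cong)
    also have "\<dots> \<le> K * (\<Sum>(x,y)\<in>site_pairs S. r x y * real (\<eta> x) * m y - r x y * real (\<eta> y) * m x
                       + dN * r x y * real N / l - r x y * m x * l / (4 * real N))"
    proof (rule mult_left_mono[OF sum_mono])
      fix p assume p: "p \<in> site_pairs S"
      obtain x y where xy: "p = (x,y)" by (cases p)
      have x: "x \<in> S" "y \<in> S" using p xy unfolding site_pairs_def by auto
      have "incl_rate r dN \<eta> x y * (W (move x y \<eta>) - W \<eta>) \<le> incl_rate r dN \<eta> x y * c x y"
        using dW[of x y] p xy rate_nn cfg x by (intro mult_left_mono) auto
      also have "\<dots> \<le> r x y * real (\<eta> x) * m y - r x y * real (\<eta> y) * m x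
                       + dN * r x y * real N / l - r x y * m x * l / (4 * real N)"
        unfolding incl_rate_def c_def
        using pair_bound[of l "real (\<eta> x)" "real (\<eta> y)" "real N" "m x" "m y" dN "r x y"]
          pos x l leN m mle1 dpos rnn
        by (simp add: algebra_simps)
      finally show "(case p of (x, y) \<Rightarrow> incl_rate r dN \<eta> x y * (W (move x y \<eta>) - W \<eta>))
          \<le> (case p of (x, y) \<Rightarrow> r x y * real (\<eta> x) * m y - r x y * real (\<eta> y) * m x
                       + dN * r x y * real N / l - r x y * m x * l / (4 * real N))" using xy by simp
    qed (use Kpos in simp)
    also have "\<dots> = K * ((\<Sum>(x,y)\<in>site_pairs S. r x y * real (\<eta> x) * m y - r x y * real (\<eta> y) * m x)
         + dN * real N * Rs / l - (\<Sum>(x,y)\<in>site_pairs S. r x y * m x) * l / (4 * real N))"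
      unfolding Rs_def
      by (simp add: sum.distrib sum_subtractf sum_distrib_left sum_distrib_right sum_divide_distrib case_prod_beta
                    algebra_simps)
    also have "\<dots> \<le> K * (0 + rmin * l / (8 * real N) - rmin * l / (4 * real N))"
    proof (rule mult_left_mono)
      have t1: "(\<Sum>(x,y)\<in>site_pairs S. r x y * real (\<eta> x) * m y - r x y * real (\<eta> y) * m x) \<le> 0"
        by (rule T1[OF fin m(3)]) simp
      have t3: "(\<Sum>(x,y)\<in>site_pairs S. r x y * m x) * l / (4 * real N) \<ge> rmin * l / (4 * real N)"
        using pairs_mx[OF fin card rmin m(1,2)] l Npos by (intro divide_right_mono mult_right_mono) auto
      show "(\<Sum>(x,y)\<in>site_pairs S. r x y * real (\<eta> x) * m y - r x y * real (\<eta> y) * m x)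
         + dN * real N * Rs / l - (\<Sum>(x,y)\<in>site_pairs S. r x y * m x) * l / (4 * real N)
         \<le> 0 + rmin * l / (8 * real N) - rmin * l / (4 * real N)"
        using t1 t3 dcond unfolding Rs_def by linarith
    qed (use Kpos in simp)
    also have "\<dots> = -1" unfolding K_def using rmin l Npos by (simp add: field_simps)
    finally have main: "1 + (\<Sum>(x,y)\<in>site_pairs S. incl_rate r dN \<eta> x y * (V (move x y \<eta>) - V \<eta>)) \<le> 0"
      by simp
    obtain x0 y1 where xy: "x0 \<in> S" "y1 \<in> S" "x0 \<noteq> y1"
    proof -
      have "S \<noteq> {}" using card by auto
      then obtain x0 where x0: "x0 \<in> S" by auto
      have "card (S - {x0}) \<ge> 1" using card x0 fin by simp
      then have "S - {x0} \<noteq> {}" by (metis card.empty not_one_le_zero)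
      then obtain y1 where "y1 \<in> S - {x0}" by auto
      then show ?thesis using that x0 by auto
    qed
    have qpos: "0 < incl_total_rate S r dN \<eta>"
    proof -
      have mem: "(x0,y1) \<in> site_pairs S" unfolding site_pairs_def using xy by auto
      have nn: "\<And>p. p \<in> site_pairs S - {(x0,y1)} \<Longrightarrow> 0 \<le> (\<lambda>(x,y). incl_rate r dN \<eta> x y) p"
        using rate_nn cfg by (auto simp: site_pairs_def)
      from member_le_sum[of "(x0,y1)" "site_pairs S" "\<lambda>(x,y). incl_rate r dN \<eta> x y", OF mem nn finite_site_pairs[OF fin]]
      have "incl_rate r dN \<eta> x0 y1 \<le> incl_total_rate S r dN \<eta>"
        unfolding incl_total_rate_def by simp
      moreover have "incl_rate r dN \<eta> x0 y1 > 0"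
      proof -
        have "r x0 y1 > 0" using rmin xy by fastforce
        moreover have "real (\<eta> x0) > 0" using ge1[OF xy(1)] by simp
        moreover have "dN + real (\<eta> y1) > 0" using dpos by simp
        ultimately show ?thesis unfolding incl_rate_def by simp
      qed
      ultimately show ?thesis by simp
    qed
    show "0 < incl_total_rate S r dN \<eta> \<and>
        1 + (\<Sum>(x,y)\<in>site_pairs S. incl_rate r dN \<eta> x y * (V (move x y \<eta>) - V \<eta>)) \<le> 0"
      using qpos main by simp
  qed
  have "\<forall>\<eta>\<in>config_space S N. incl_expected_hitting_time S r dN U \<eta> \<le> ennreal (V \<eta>)"
    by (rule lfp_bound[OF fin Vnn rate_nn drift])
  then show ?thesis using Vbound unfolding K_def a_def
    by (meson ennreal_leI order_trans)
qed




lemma ln_le_lin: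
  fixes \<delta> :: real and N :: nat
  assumes "\<delta> > 0" "real N \<ge> 4 * \<delta>^2" "N \<ge> 1"
  shows "\<delta> * ln (real N) \<le> real N"
proof -
  have Np: "real N > 0" using assms by simp
  have "ln (real N) = 2 * ln (sqrt (real N))" using Np by (simp add: ln_sqrt)
  also have "\<dots> \<le> 2 * sqrt (real N)" using ln_le_minus_one[of "sqrt (real N)"] Np by simp
  finally have A: "\<delta> * ln (real N) \<le> \<delta> * (2 * sqrt (real N))" using assms by (simp add: mult_left_mono)
  have "2 * \<delta> \<le> sqrt (real N)"
  proof -
    have "(2 * \<delta>)^2 \<le> real N" using assms by (simp add: power_mult_distrib)
    then have "sqrt ((2 * \<delta>)^2) \<le> sqrt (real N)" by (rule real_sqrt_le_mono)
    moreover have "sqrt ((2 * \<delta>)^2) = 2 * \<delta>" using assms by (simp only: real_sqrt_abs)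
    ultimately show ?thesis by linarith
  qed
  then have "(2 * \<delta>) * sqrt (real N) \<le> sqrt (real N) * sqrt (real N)"
    by (rule mult_right_mono) simp
  then have "\<delta> * (2 * sqrt (real N)) \<le> sqrt (real N) * sqrt (real N)"
    by (simp add: algebra_simps)
  also have "\<dots> = real N" by simp
  finally show ?thesis using A by simp
qed

theorem theorem3p18:
  fixes S :: "'a set" and r :: "'a \<Rightarrow> 'a \<Rightarrow> real" and d :: "nat \<Rightarrow> real" and \<delta> :: real
  assumes "finite S" and "card S \<ge> 2"
    and "\<And>x y. x \<in> S \<Longrightarrow> y \<in> S \<Longrightarrow> r x y \<ge> 0"
    and "\<And>x y. x \<in> S \<Longrightarrow> y \<in> S \<Longrightarrow> x \<noteq> y \<Longrightarrow> r x y > 0"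
    and "\<And>N. d N > 0"
    and "(\<lambda>N. d N * real N ^ 2 / (ln (real N)) ^ 2) \<longlonglongrightarrow> 0"
    and "\<delta> > 0"
  shows "\<exists>C>0. \<forall>N.
     (SUP \<eta>\<in>config_space S N.
        incl_expected_hitting_time S r (d N)
          {\<zeta> \<in> config_space S N. \<exists>x\<in>S. real (\<zeta> x) \<le> \<delta> * ln (real N)} \<eta>)
     \<le> ennreal (C * real N)"
proof -
  note fin = assms(1) and card = assms(2) and rnn = assms(3) and rpos = assms(4)
    and dpos = assms(5) and lim = assms(6) and dl = assms(7)
  define U where "U N = {\<zeta> \<in> config_space S N. \<exists>x\<in>S. real (\<zeta> x) \<le> \<delta> * ln (real N)}" for N
  have Sne: "S \<noteq> {}" using card by auto
  have pne: "site_pairs S \<noteq> {}"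
  proof -
    obtain x0 where x0: "x0 \<in> S" using Sne by auto
    have "card (S - {x0}) \<ge> 1" using card x0 fin by simp
    then have "S - {x0} \<noteq> {}" by (metis card.empty not_one_le_zero)
    then obtain y1 where "y1 \<in> S - {x0}" by auto
    then show ?thesis using x0 unfolding site_pairs_def by auto
  qed
  define rmin where "rmin = Min ((\<lambda>(x,y). r x y) ` site_pairs S)"
  have rmin_le: "\<forall>x\<in>S. \<forall>y\<in>S. x \<noteq> y \<longrightarrow> rmin \<le> r x y"
    unfolding rmin_def using finite_site_pairs[OF fin]
    by (auto intro!: Min_le simp: site_pairs_def)
  have rmin_pos: "rmin > 0"
    unfolding rmin_def using finite_site_pairs[OF fin] pne rpos
    by (subst Min_gr_iff) (auto simp: site_pairs_def)
  obtain m where m: "\<forall>y\<in>S. 0 \<le> m y" "(\<Sum>y\<in>S. m y) = 1" "\<forall>x\<in>S. (\<Sum>y\<in>S. (r x y - r y x) * m y) \<le> 0"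
    using skew_strategy[OF fin Sne, of r] by blast
  define Rs where "Rs = (\<Sum>(x,y)\<in>site_pairs S. r x y)"
  have Rs: "Rs \<ge> 0" unfolding Rs_def using rnn by (intro sum_nonneg) (auto simp: site_pairs_def)
  define \<epsilon> where "\<epsilon> = rmin * \<delta>^2 / (8 * (Rs + 1))"
  have \<epsilon>: "\<epsilon> > 0" unfolding \<epsilon>_def using rmin_pos dl Rs by simp
  have ev1: "eventually (\<lambda>N. d N * real N ^ 2 / (ln (real N)) ^ 2 < \<epsilon>) sequentially"
    using order_tendstoD(2)[OF lim \<epsilon>] .
  have ev2: "eventually (\<lambda>N. N \<ge> max 2 (max (nat \<lceil>exp (2/\<delta>)\<rceil>) (nat \<lceil>4 * \<delta>^2\<rceil>))) sequentially"
    by (rule eventually_ge_at_top)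
  obtain N0 where N0: "\<And>N. N \<ge> N0 \<Longrightarrow> d N * real N ^ 2 / (ln (real N)) ^ 2 < \<epsilon> \<and>
      N \<ge> max 2 (max (nat \<lceil>exp (2/\<delta>)\<rceil>) (nat \<lceil>4 * \<delta>^2\<rceil>))"
    using eventually_conj[OF ev1 ev2] unfolding eventually_sequentially by blast
  have large: "\<forall>\<eta>\<in>config_space S N. incl_expected_hitting_time S r (d N) (U N) \<eta>
      \<le> ennreal (8 / (rmin * \<delta>) * real N)" if N: "N \<ge> N0" for N
  proof -
    define l where "l = \<delta> * ln (real N)"
    have N2: "N \<ge> 2" and Nexp: "real N \<ge> exp (2/\<delta>)" and N4: "real N \<ge> 4 * \<delta>^2"
      and dsmall: "d N * real N ^ 2 / (ln (real N)) ^ 2 < \<epsilon>"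
      using N0[OF N] by (auto simp: le_nat_iff intro: order.trans[OF real_nat_ceiling_ge])
    have Np: "real N > 0" using N2 by simp
    have lnpos: "ln (real N) > 0" using N2 by simp
    have l2: "l \<ge> 2"
    proof -
      have "ln (exp (2/\<delta>)) \<le> ln (real N)" using Nexp Np by (subst ln_le_cancel_iff) auto
      then have "2/\<delta> \<le> ln (real N)" by simp
      then show ?thesis unfolding l_def using dl by (simp add: field_simps)
    qed
    have lN: "l \<le> real N" unfolding l_def using ln_le_lin[OF dl N4] N2 by simp
    have dN2: "d N * real N ^ 2 \<le> \<epsilon> * (ln (real N))^2"
      using dsmall lnpos by (simp add: field_simps)
    have dcond: "d N * real N * Rs / l \<le> rmin * l / (8 * real N)"
    proof -
      have lpos: "l > 0" using l2 by simp
      have "8 * (d N * real N ^ 2) * Rs \<le> 8 * (\<epsilon> * (ln (real N))^2) * Rs"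
        using dN2 Rs by (intro mult_right_mono) auto
      also have "\<dots> = rmin * l^2 * (Rs / (Rs + 1))"
        unfolding \<epsilon>_def l_def using Rs by (simp add: field_simps power_mult_distrib)
      also have "\<dots> \<le> rmin * l^2 * 1"
        using Rs rmin_pos by (intro mult_left_mono) auto
      finally have A: "8 * (d N * real N ^ 2) * Rs \<le> rmin * l^2" by simp
      show ?thesis using A lpos Np by (simp add: field_simps power2_eq_square)
    qed
    have offU: "\<forall>\<eta>\<in>config_space S N - U N. \<forall>x\<in>S. l < real (\<eta> x)"
      unfolding U_def l_def by (auto simp: not_less)
    have "\<forall>\<eta>\<in>config_space S N. incl_expected_hitting_time S r (d N) (U N) \<eta>
            \<le> ennreal (8 * real N / (rmin * l) * ln (real N / (l - 1)))"
      by (rule large_N[OF fin card rnn dpos rmin_le rmin_pos m l2 lN dcond[unfolded Rs_def] offU])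
    moreover have "8 * real N / (rmin * l) * ln (real N / (l - 1)) \<le> 8 / (rmin * \<delta>) * real N"
    proof -
      have "ln (real N / (l - 1)) \<le> ln (real N)"
        using l2 Np by (subst ln_le_cancel_iff) (auto simp: field_simps)
      then have "8 * real N / (rmin * l) * ln (real N / (l - 1)) \<le> 8 * real N / (rmin * l) * ln (real N)"
        using rmin_pos l2 Np by (intro mult_left_mono) auto
      also have "\<dots> = 8 / (rmin * \<delta>) * real N" unfolding l_def using lnpos dl rmin_pos by (simp add: field_simps)
      finally show ?thesis .
    qed
    ultimately show ?thesis by (meson ennreal_leI order_trans)
  qed
  have offU1: "\<forall>\<eta>\<in>config_space S N - U N. \<forall>x\<in>S. 1 \<le> \<eta> x" for N
  proof (intro ballI)
    fix \<eta> x assume \<eta>: "\<eta> \<in> config_space S N - U N" and x: "x \<in> S"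
    have "\<not> real (\<eta> x) \<le> \<delta> * ln (real N)" using \<eta> x unfolding U_def by auto
    moreover have "\<delta> * ln (real N) \<ge> 0" using dl by (cases N) auto
    ultimately show "1 \<le> \<eta> x" by linarith
  qed
  have "\<exists>B. \<forall>\<eta>\<in>config_space S N. incl_expected_hitting_time S r (d N) (U N) \<eta> \<le> ennreal B" for N
    by (rule small_N[OF fin card]) (use rnn rpos dpos offU1 in auto)
  then obtain Bf where Bf: "\<And>N. \<forall>\<eta>\<in>config_space S N. incl_expected_hitting_time S r (d N) (U N) \<eta> \<le> ennreal (Bf N)"
    by metis
  have zero: "\<forall>\<eta>\<in>config_space S 0. incl_expected_hitting_time S r (d 0) (U 0) \<eta> \<le> ennreal 0"
  proof -
    have empty: "config_space S 0 - U 0 = {}"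
    proof
      show "config_space S 0 - U 0 \<subseteq> {}"
      proof
        fix \<eta> assume \<eta>: "\<eta> \<in> config_space S 0 - U 0"
        obtain x where x: "x \<in> S" using Sne by auto
        have "\<eta> x = 0" using \<eta> x fin unfolding config_space_def by auto
        then show "\<eta> \<in> {}" using \<eta> x unfolding U_def by auto
      qed
    qed simp
    show ?thesis
    proof (rule lfp_bound[of S 0 "\<lambda>_. 0"])
      have "0 \<le> d 0" using dpos[of 0] by simp
      then show "\<forall>\<eta>\<in>config_space S 0. \<forall>x\<in>S. \<forall>y\<in>S. 0 \<le> incl_rate r (d 0) \<eta> x y"
        using rnn unfolding incl_rate_def by (auto intro!: mult_nonneg_nonneg)
    qed (use fin empty in auto)
  qed
  define C where "C = 8 / (rmin * \<delta>) + (\<Sum>n\<in>{1..<N0}. \<bar>Bf n\<bar>)"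
  have C0: "C > 0" unfolding C_def using rmin_pos dl by (simp add: sum_nonneg add_pos_nonneg)
  have "\<forall>N. (SUP \<eta>\<in>config_space S N. incl_expected_hitting_time S r (d N) (U N) \<eta>) \<le> ennreal (C * real N)"
  proof
    fix N
    show "(SUP \<eta>\<in>config_space S N. incl_expected_hitting_time S r (d N) (U N) \<eta>) \<le> ennreal (C * real N)"
    proof (rule SUP_least)
      fix \<eta> assume \<eta>: "\<eta> \<in> config_space S N"
      show "incl_expected_hitting_time S r (d N) (U N) \<eta> \<le> ennreal (C * real N)"
      proof (cases "N = 0")
        case True
        then show ?thesis using zero \<eta> by simp
      next
        case Nn0: False
        show ?thesis
        proof (cases "N \<ge> N0")
          case True
          have "8 / (rmin * \<delta>) * real N \<le> C * real N" unfolding C_def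
            by (intro mult_right_mono) (auto intro: sum_nonneg)
          then show ?thesis using large[OF True] \<eta> by (meson ennreal_leI order_trans)
        next
          case False
          then have Nin: "N \<in> {1..<N0}" using Nn0 by auto
          have "Bf N \<le> \<bar>Bf N\<bar>" by simp
          also have "\<dots> \<le> (\<Sum>n\<in>{1..<N0}. \<bar>Bf n\<bar>)" using Nin by (intro member_le_sum) auto
          also have "\<dots> \<le> C" unfolding C_def using rmin_pos dl by simp
          also have "\<dots> \<le> C * real N" using C0 Nn0 by simp
          finally have "Bf N \<le> C * real N" .
          then show ?thesis using Bf[of N] \<eta> by (meson ennreal_leI order_trans)
        qed
      qed
    qed
  qed
  then show ?thesis using C0 unfolding U_def by blast
qed


end
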